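(* Let $f_i:\mathbb{R}^d\to\mathbb{R}$, $i\in[n]$, be differentiable and $L$-smooth. Assume the heavy-tailed noise condition: with $\mathcal{F}_{-1}=\{\Omega,\emptyset\}$ and $\mathcal{F}_t=\sigma(\{\boldsymbol{\xi}_i^0,\dots,\boldsymbol{\xi}_i^{t-1}:i\in[n]\})$, for every $\mathcal{F}_t$-measurable $\boldsymbol{x}$, all $i$ and $t\ge0$: $\mathbb{E}[\boldsymbol{g}_i(\boldsymbol{x},\boldsymbol{\xi}_i^t)\mid\mathcal{F}_t]=\nabla f_i(\boldsymbol{x})$, $\mathbb{E}[\|\boldsymbol{g}_i(\boldsymbol{x},\boldsymbol{\xi}_i^t)-\nabla f_i(\boldsymbol{x})\|^p\mid\mathcal{F}_t]\le\sigma^p$ for some $p\in(1,2]$, $\sigma\ge0$, and $\{\boldsymbol{\xi}_i^t\}$ independent. Let $\boldsymbol{W}=(w_{ir})$ be nonnegative, primitive, doubly stochastic, with $\lambda:=\|\boldsymbol{W}-\mathbf{1}_n\mathbf{1}_n^\top/n\|_2<1$. For the iterates of GT-NSGDm (described in the context) with $\alpha>0$ and $\beta\in(0,1)$, and $\bar{\boldsymbol{y}}^t=\frac1n\sum_i\boldsymbol{y}_i^t$, we have for all $t=0,\dots,T$: $$\frac1n\mathbb{E}\Big[\sum_{i=1}^n\|\boldsymbol{y}_i^t-\bar{\boldsymbol{y}}^t\|\Big]\le 2\sqrt2\,n^{1/2}\Big(\frac1\beta-1\Big)\Big(\sum_{k=0}^t\lambda^{(t-k+1)p}\Big)^{1/p}\sigma+\frac{1}{\sqrt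 n}\Big(\frac1\beta-1\Big)\sum_{k=0}^t\lambda^{t-k+1}\mathbb{E}\big[\|\nabla F(\boldsymbol{x}^k)-\boldsymbol{v}^k\|\big].$$
   Context: Algorithm GT-NSGDm (run in parallel at every node $i$): initialize $\boldsymbol{x}_i^{-1}=\boldsymbol{x}_i^0=\bar{\boldsymbol{x}}^0$ (a common point) and $\boldsymbol{v}_i^{-1}=\boldsymbol{y}_i^{-1}=\mathbf{0}_d$. For $t=0,\dots,T-1$: sample $\boldsymbol{\xi}_i^t$; set $\boldsymbol{v}_i^t=\beta\boldsymbol{v}_i^{t-1}+(1-\beta)\boldsymbol{g}_i(\boldsymbol{x}_i^t,\boldsymbol{\xi}_i^t)$; $\boldsymbol{y}_i^t=\sum_{r=1}^n w_{ir}(\boldsymbol{y}_r^{t-1}+\boldsymbol{v}_r^t-\boldsymbol{v}_r^{t-1})$; $\boldsymbol{x}_i^{t+1}=\sum_{r=1}^n w_{ir}\big(\boldsymbol{x}_r^t-\alpha\,\boldsymbol{y}_r^t/\|\boldsymbol{y}_r^t\|\big)$. Stacked vectors: $\boldsymbol{x}^k=[(\boldsymbol{x}_1^k)^\top,\dots,(\boldsymbol{x}_n^k)^\top]^\top$, $\boldsymbol{v}^k=[(\boldsymbol{v}_1^k)^\top,\dots,(\boldsymbol{v}_n^k)^\top]^\top$, $\nabla F(\boldsymbol{x}^k)=[\nabla f_1(\boldsymbol{x}_1^k)^\top,\dots,\nabla f_n(\boldsymbol{x}_n^k)^\top]^\top\in\mathbb{R}^{nd}$; norms are Euclidean. *)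

theory Defs
  imports "HOL-Analysis.Analysis" "HOL-Probability.Probability"
begin

(* matrix power W^k *)
fun mat_pow :: "real^'n^'n \<Rightarrow> nat \<Rightarrow> real^'n^'n" where
  "mat_pow W 0 = mat 1"
| "mat_pow W (Suc k) = W ** mat_pow W k"

(* primitive nonnegative matrix: some positive power is entrywise positive *)
definition primitive_matrix :: "real^'n^'n \<Rightarrow> bool" where
  "primitive_matrix W \<longleftrightarrow> (\<exists>k>0. \<forall>i j. (mat_pow W k) $ i $ j > 0)"

definition doubly_stochastic :: "real^'n::finite^'n \<Rightarrow> bool" where
  "doubly_stochastic W \<longleftrightarrow> (\<forall>i j. W $ i $ j \<ge> 0) \<and>
     (\<forall>i. (\<Sum>j\<in>UNIV. W $ i $ j) = 1) \<and> (\<forall>j. (\<Sum>i\<in>UNIV. W $ i $ j) = 1)"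

(* lambda = || W - 1 1^T / n ||_2  (spectral norm = operator norm w.r.t. Euclidean norm) *)
definition mix_lambda :: "real^'n::finite^'n \<Rightarrow> real" where
  "mix_lambda W = onorm (\<lambda>v. (\<chi> i j. W $ i $ j - 1 / real CARD('n)) *v v)"

(* natural filtration: F_t = sigma(xi_i^k : i node, k < t); F_0 is the trivial algebra *)
definition nat_filtr :: "'a measure \<Rightarrow> 's measure \<Rightarrow> ('n \<Rightarrow> nat \<Rightarrow> 'a \<Rightarrow> 's) \<Rightarrow> nat \<Rightarrow> 'a measure" where
  "nat_filtr M S \<xi> t = sigma (space M)
     {\<xi> i k -` A \<inter> space M | i k A. k < t \<and> A \<in> sets S}"

(* one step of GT-NSGDm: state (x^t, v^{t-1}, y^{t-1}) \<mapsto> (x^{t+1}, v^t, y^t),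
   using the samples xi^t (given as the sample vector s) *)
definition gt_step ::
  "real^'n::finite^'n \<Rightarrow> real \<Rightarrow> real \<Rightarrow> ('n \<Rightarrow> 'd::euclidean_space \<Rightarrow> 's \<Rightarrow> 'd) \<Rightarrow> ('n \<Rightarrow> 's)
   \<Rightarrow> ('n \<Rightarrow> 'd) \<times> ('n \<Rightarrow> 'd) \<times> ('n \<Rightarrow> 'd) \<Rightarrow> ('n \<Rightarrow> 'd) \<times> ('n \<Rightarrow> 'd) \<times> ('n \<Rightarrow> 'd)" where
  "gt_step W \<alpha> \<beta> g s st =
    (let x = fst st; vold = fst (snd st); yold = snd (snd st);
         v = (\<lambda>i. \<beta> *\<^sub>R vold i + (1 - \<beta>) *\<^sub>R g i (x i) (s i));
         y = (\<lambda>i. \<Sum>r\<in>UNIV. W $ i $ r *\<^sub>R (yold r + v r - vold r));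
         x' = (\<lambda>i. \<Sum>r\<in>UNIV. W $ i $ r *\<^sub>R (x r - \<alpha> *\<^sub>R ((1 / norm (y r)) *\<^sub>R y r)))
     in (x', v, y))"

(* gt_state t = (x^t, v^{t-1}, y^{t-1}); initial x^0 = x0, v^{-1} = y^{-1} = 0 *)
fun gt_state ::
  "real^'n::finite^'n \<Rightarrow> real \<Rightarrow> real \<Rightarrow> ('n \<Rightarrow> 'd::euclidean_space \<Rightarrow> 's \<Rightarrow> 'd) \<Rightarrow> 'd
   \<Rightarrow> ('n \<Rightarrow> nat \<Rightarrow> 's) \<Rightarrow> nat \<Rightarrow> ('n \<Rightarrow> 'd) \<times> ('n \<Rightarrow> 'd) \<times> ('n \<Rightarrow> 'd)" where
  "gt_state W \<alpha> \<beta> g x0 s 0 = ((\<lambda>_. x0), (\<lambda>_. 0), (\<lambda>_. 0))"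
| "gt_state W \<alpha> \<beta> g x0 s (Suc t) = gt_step W \<alpha> \<beta> g (\<lambda>i. s i t) (gt_state W \<alpha> \<beta> g x0 s t)"

definition gt_x where "gt_x W \<alpha> \<beta> g x0 s t = fst (gt_state W \<alpha> \<beta> g x0 s t)"
definition gt_v where "gt_v W \<alpha> \<beta> g x0 s t = fst (snd (gt_state W \<alpha> \<beta> g x0 s (Suc t)))"
definition gt_y where "gt_y W \<alpha> \<beta> g x0 s t = snd (snd (gt_state W \<alpha> \<beta> g x0 s (Suc t)))"

(* Euclidean norm of a stacked vector in R^{nd} *)
definition stack_norm :: "('n::finite \<Rightarrow> 'd::euclidean_space) \<Rightarrow> real" where
  "stack_norm z = sqrt (\<Sum>i\<in>UNIV. (norm (z i))\<^sup>2)"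

end

theory Submission
  imports Defs
begin



lemma sq_powr: "(z::real) \<ge> 0 \<Longrightarrow> (z\<^sup>2) powr r = z powr (2*r)"
  by (metis powr_powr powr_realpow' numeral_One zero_neq_numeral of_nat_numeral)

lemma powr2: "(z::real) \<ge> 0 \<Longrightarrow> z powr 2 = z\<^sup>2"
  using sq_powr[of z 1] by simp

lemma one_plus_le_two_powr:
  fixes p :: real assumes "1 \<le> p" shows "1 + p \<le> 2 powr p"
proof -
  have "2 powr (1 + (p - 1)) = 2 powr 1 * 2 powr (p - 1)" by (rule powr_add)
  then have "2 powr p = 2 * 2 powr (p - 1)" by simp
  also have "2 powr (p - 1) = exp ((p - 1) * ln 2)" by (simp add: powr_def)
  also have "exp ((p - 1) * ln 2) \<ge> 1 + (p - 1) * ln 2" by (rule exp_ge_add_one_self)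
  moreover have "(p - 1) * ln 2 \<ge> (p - 1) * (2/3)"
    using ln2_ge_two_thirds assms by (intro mult_left_mono) auto
  ultimately show ?thesis using assms by argo
qed

lemma powr_subadd:
  fixes u v q :: real assumes "0 \<le> u" "0 \<le> v" "0 < q" "q \<le> 1"
  shows "(u + v) powr q \<le> u powr q + v powr q"
proof (cases "u + v = 0")
  case True then show ?thesis using assms by auto
next
  case False
  then have s: "u + v > 0" using assms by auto
  have "u / (u+v) \<le> (u/(u+v)) powr q"
    using powr_mono'[of q 1 "u/(u+v)"] assms s by (auto simp: divide_le_eq_1)
  moreover have "v / (u+v) \<le> (v/(u+v)) powr q"
    using powr_mono'[of q 1 "v/(u+v)"] assms s by (auto simp: divide_le_eq_1)
  moreover have "u/(u+v) + v/(u+v) = 1" using s by (simp add: add_divide_distrib[symmetric])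
  ultimately have "1 \<le> (u/(u+v)) powr q + (v/(u+v)) powr q"
    by linarith
  also have "\<dots> = (u powr q + v powr q) / (u+v) powr q" by (simp add: powr_divide add_divide_distrib)
  finally show ?thesis using s by (simp add: le_divide_eq)
qed

lemma powr_subadd_sum:
  fixes u :: "'i \<Rightarrow> real" assumes "\<And>i. 0 \<le> u i" "0 < q" "q \<le> 1"
  shows "(sum u A) powr q \<le> (\<Sum>i\<in>A. u i powr q)"
proof (induction A rule: infinite_finite_induct)
  case (insert x F)
  then show ?case
    using powr_subadd[of "u x" "sum u F" q] assms by (simp add: sum_nonneg)
qed auto

lemma concave_bern:
  fixes w q :: real assumes "0 \<le> w" "0 \<le> q" "q \<le> 1"
  shows "w powr q \<le> q * w + (1 - q)"
proof (cases "w = 0")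
  case True then show ?thesis using assms by simp
next
  case False
  then show ?thesis using Youngs_inequality_0[of q "1-q" w 1] assms by simp
qed

lemma convex_bern:
  fixes u p :: real assumes "0 \<le> u" "1 < p"
  shows "u \<le> u powr p / p + (p - 1) / p"
proof -
  have q: "1 / p + 1 / (p/(p-1)) = 1" using assms by (simp add: field_simps)
  have "u * 1 \<le> u powr p / p + 1 powr (p/(p-1)) / (p/(p-1))"
    by (rule Youngs_inequality) (use assms q in \<open>auto simp: field_simps\<close>)
  then show ?thesis using assms by (simp add: field_simps)
qed

lemma pineq:
  fixes x y :: "'a::real_inner" and p :: real
  assumes p: "1 < p" "p \<le> 2"
  shows "norm (x + y) powr p \<le> norm x powr p + p * norm x powr (p - 2) * inner x y
           + 2 powr p * norm y powr p"
proof -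
  define a where "a = norm x"
  define b where "b = norm y"
  define c where "c = inner x y"
  define z where "z = norm (x + y)"
  define q where "q = p / 2"
  have a0: "a \<ge> 0" and b0: "b \<ge> 0" and z0: "z \<ge> 0" by (auto simp: a_def b_def z_def)
  have zz: "z\<^sup>2 = a\<^sup>2 + 2 * c + b\<^sup>2"
    by (simp add: z_def a_def b_def c_def power2_norm_eq_inner inner_add inner_commute)
  have cab: "\<bar>c\<bar> \<le> a * b" unfolding c_def a_def b_def by (rule Cauchy_Schwarz_ineq2)
  have zp: "z powr p = (z\<^sup>2) powr q"
    using sq_powr[OF z0, of q] by (simp add: q_def)
  have two: "1 + p \<le> 2 powr p" using one_plus_le_two_powr p by simp
  have "1 * b powr p \<le> 2 powr p * b powr p"
    by (rule mult_right_mono) (use p in \<open>auto intro: ge_one_powr_ge_zero\<close>)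
  then have bp: "b powr p \<le> 2 powr p * b powr p" by simp
  show ?thesis
  proof (cases "a = 0")
    case True
    then have "x = 0" by (simp add: a_def)
    then show ?thesis using bp by (simp add: b_def)
  next
    case False
    then have apos: "a > 0" using a0 by simp
    show ?thesis
    proof (cases "b \<le> a")
      case True
      define w where "w = z\<^sup>2 / a\<^sup>2"
      have w0: "w \<ge> 0" by (simp add: w_def)
      have "(z\<^sup>2) powr q = (a\<^sup>2) powr q * w powr q"
        using apos by (simp add: w_def powr_divide)
      also have "(a\<^sup>2) powr q = a powr p"
        using sq_powr[OF a0, of q] by (simp add: q_def)
      also have "w powr q \<le> q * w + (1 - q)"
        using concave_bern[OF w0, of q] p by (simp add: q_def)
      finally have "(z\<^sup>2) powr q \<le> a powr p * (q * w + (1 - q))"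
        using apos by (simp add: mult_left_mono)
      also have "a powr p * (q * w + (1 - q)) = a powr p + q * (a powr p / a\<^sup>2) * (z\<^sup>2 - a\<^sup>2)"
        using apos unfolding w_def by (simp add: algebra_simps diff_divide_distrib)
      also have "a powr p / a\<^sup>2 = a powr (p - 2)"
        using apos by (simp add: powr_diff powr2)
      also have "q * a powr (p - 2) * (z\<^sup>2 - a\<^sup>2) = p * a powr (p - 2) * c + q * (a powr (p-2) * b\<^sup>2)"
        unfolding zz q_def by (simp add: field_simps)
      finally have 1: "z powr p \<le> a powr p + p * a powr (p - 2) * c + q * (a powr (p-2) * b\<^sup>2)"
        using zp by simp
      have "a powr (p-2) * b\<^sup>2 \<le> b powr p"
      proof (cases "b = 0")
        case False
        then have bpos: "b > 0" using b0 by simp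
        have "a powr (p-2) \<le> b powr (p-2)" using powr_mono2'[of "p-2" b a] True bpos p by simp
        then have "a powr (p-2) * b\<^sup>2 \<le> b powr (p-2) * b\<^sup>2" by (simp add: mult_right_mono)
        also have "\<dots> = b powr p" using bpos by (simp add: powr_diff powr2)
        finally show ?thesis .
      qed simp
      moreover have "0 \<le> a powr (p-2) * b\<^sup>2" by simp
      moreover have "q \<le> 1" "0 \<le> q" using p by (auto simp: q_def)
      ultimately have "q * (a powr (p-2) * b\<^sup>2) \<le> b powr p"
        by (meson mult_left_le_one_le order_trans)
      with 1 bp show ?thesis by (simp add: a_def b_def c_def z_def)
    next
      case False
      then have ab: "a < b" by simp
      show ?thesis
      proof (cases "c \<ge> 0")
        case True
        have "z \<le> a + b" by (simp add: z_def a_def b_def norm_triangle_ineq)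
        also have "\<dots> \<le> 2 * b" using ab by simp
        finally have "z powr p \<le> (2 * b) powr p" using z0 p by (intro powr_mono2) auto
        also have "\<dots> = 2 powr p * b powr p" by (simp add: powr_mult b0)
        finally have "z powr p \<le> 2 powr p * b powr p" .
        moreover have "0 \<le> a powr p + p * a powr (p - 2) * c" using True p by simp
        ultimately show ?thesis by (simp add: a_def b_def c_def z_def)
      next
        case False
        have "z\<^sup>2 \<le> a\<^sup>2 + b\<^sup>2" using zz False by simp
        then have "(z\<^sup>2) powr q \<le> (a\<^sup>2 + b\<^sup>2) powr q" using p by (intro powr_mono2) (auto simp: q_def)
        also have "\<dots> \<le> (a\<^sup>2) powr q + (b\<^sup>2) powr q" using p by (intro powr_subadd) (auto simp: q_def)
        also have "(a\<^sup>2) powr q = a powr p" using sq_powr[OF a0, of q] by (simp add: q_def)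
        also have "(b\<^sup>2) powr q = b powr p" using sq_powr[OF b0, of q] by (simp add: q_def)
        finally have 1: "z powr p \<le> a powr p + b powr p" using zp by simp
        have "- c \<le> a * b" using cab by simp
        moreover have "0 \<le> p * a powr (p - 2)" using p by simp
        ultimately have "p * a powr (p - 2) * (- c) \<le> p * a powr (p-2) * (a * b)"
          by (rule mult_left_mono)
        then have "- (p * a powr (p - 2) * c) \<le> p * a powr (p-2) * (a * b)" by simp
        also have "p * a powr (p-2) * (a * b) = p * (a powr (p - 1) * b)"
          using apos by (simp add: powr_diff powr2 field_simps power2_eq_square)
        also have "a powr (p-1) \<le> b powr (p-1)" using p a0 ab by (intro powr_mono2) auto
        then have "p * (a powr (p - 1) * b) \<le> p * (b powr (p-1) * b)"
          using p b0 by (simp add: mult_left_mono mult_right_mono)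
        also have "b powr (p-1) * b = b powr p" using ab apos by (simp add: powr_diff field_simps)
        finally have 2: "- (p * a powr (p - 2) * c) \<le> p * b powr p" .
        have "(1 + p) * b powr p \<le> 2 powr p * b powr p" using two by (simp add: mult_right_mono)
        with 1 2 show ?thesis by (simp add: a_def b_def c_def z_def algebra_simps)
      qed
    qed
  qed
qed



definition mmul :: "real^'n::finite^'n \<Rightarrow> ('d::real_vector)^'n \<Rightarrow> 'd^'n" where
  "mmul A z = (\<chi> i. \<Sum>r\<in>UNIV. A$i$r *\<^sub>R z$r)"

lemma nsq_vec: "(norm (z :: ('d::real_inner)^'n::finite))\<^sup>2 = (\<Sum>i\<in>UNIV. (norm (z$i))\<^sup>2)"
  by (simp add: power2_norm_eq_inner inner_vec_def)

lemma nsq_eucl: "(norm (e :: 'd::euclidean_space))\<^sup>2 = (\<Sum>b\<in>Basis. (inner e b)\<^sup>2)"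
proof -
  have "(norm e)\<^sup>2 = inner e e" by (rule power2_norm_eq_inner)
  also have "\<dots> = (\<Sum>b\<in>Basis. (inner e b) * (inner e b))" by (rule euclidean_inner)
  finally show ?thesis by (simp add: power2_eq_square)
qed

lemma mmul_add: "mmul A (x + y) = mmul A x + mmul A y"
  by (simp add: mmul_def vec_eq_iff sum.distrib scaleR_add_right)

lemma mmul_scaleR: "mmul A (c *\<^sub>R x) = c *\<^sub>R mmul A x"
  by (simp add: mmul_def vec_eq_iff scaleR_sum_right mult.commute)

lemma mmul_zero[simp]: "mmul A 0 = 0"
  by (simp add: mmul_def vec_eq_iff)

lemma mmul_bound:
  fixes z :: "'d::euclidean_space ^ 'n::finite" and A :: "real^'n^'n"
  shows "norm (mmul A z) \<le> onorm ((*v) A) * norm z"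
proof -
  define l where "l = onorm ((*v) A)"
  have l0: "l \<ge> 0" unfolding l_def by (rule onorm_pos_le) simp
  define zb where "zb b = (\<chi> r. inner (z$r) b)" for b
  have "(norm (mmul A z))\<^sup>2 = (\<Sum>i\<in>UNIV. \<Sum>b\<in>Basis. (inner ((mmul A z)$i) b)\<^sup>2)"
    by (simp add: nsq_vec nsq_eucl)
  also have "\<dots> = (\<Sum>b\<in>Basis. \<Sum>i\<in>UNIV. ((A *v zb b)$i)\<^sup>2)"
    by (subst sum.swap) (simp add: mmul_def matrix_vector_mult_def zb_def inner_sum_left)
  also have "\<dots> = (\<Sum>b\<in>Basis. (norm (A *v zb b))\<^sup>2)"
    by (simp add: nsq_vec)
  also have "\<dots> \<le> (\<Sum>b\<in>Basis. (l * norm (zb b))\<^sup>2)"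
  proof (rule sum_mono)
    fix b :: 'd
    have "norm (A *v zb b) \<le> l * norm (zb b)" unfolding l_def by (rule onorm) simp
    then show "(norm (A *v zb b))\<^sup>2 \<le> (l * norm (zb b))\<^sup>2"
      by (simp add: power_mono)
  qed
  also have "\<dots> = l\<^sup>2 * (\<Sum>b\<in>Basis. \<Sum>r\<in>UNIV. (inner (z$r) b)\<^sup>2)"
    by (simp add: power_mult_distrib sum_distrib_left nsq_vec zb_def)
  also have "\<dots> = l\<^sup>2 * (norm z)\<^sup>2"
    by (subst sum.swap) (simp add: nsq_vec nsq_eucl)
  finally have "(norm (mmul A z))\<^sup>2 \<le> (l * norm z)\<^sup>2" by (simp add: power_mult_distrib)
  then show ?thesis using l0 unfolding l_def by (simp add: power2_le_iff_abs_le)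
qed





fun nrec :: "real^'n::finite^'n \<Rightarrow> (nat \<Rightarrow> 'a \<Rightarrow> ('d::real_vector)^'n) \<Rightarrow> nat \<Rightarrow> 'a \<Rightarrow> 'd^'n" where
  "nrec A E 0 \<omega> = 0"
| "nrec A E (Suc t) \<omega> = mmul A (nrec A E t \<omega> + E t \<omega>)"

lemma nrec_add: "nrec A (\<lambda>t \<omega>. E t \<omega> + D t \<omega>) t \<omega> = nrec A E t \<omega> + nrec A D t \<omega>"
  by (induction t) (simp_all add: mmul_add[symmetric] algebra_simps)

lemma nrec_scale: "nrec A (\<lambda>t \<omega>. c *\<^sub>R E t \<omega>) t \<omega> = c *\<^sub>R nrec A E t \<omega>"
  by (induction t) (simp_all add: mmul_scaleR[symmetric] algebra_simps)

lemma linear_mmul: "linear (mmul A)"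
  by (rule linearI) (simp_all add: mmul_add mmul_scaleR)

lemma bounded_linear_mmul: "bounded_linear (mmul A :: ('d::euclidean_space)^'n::finite \<Rightarrow> _)"
  using linear_mmul linear_conv_bounded_linear by blast

lemma mmul_meas[measurable]:
  fixes N :: "'a \<Rightarrow> ('d::euclidean_space)^'n::finite"
  assumes "N \<in> borel_measurable F"
  shows "(\<lambda>\<omega>. mmul A (N \<omega>)) \<in> borel_measurable F"
  by (rule borel_measurable_continuous_on[OF linear_continuous_on[OF bounded_linear_mmul] assms])

lemma nrec_norm:
  fixes E :: "nat \<Rightarrow> 'a \<Rightarrow> ('d::euclidean_space)^'n::finite"
  shows "norm (nrec A E t \<omega>) \<le> (\<Sum>k<t. onorm ((*v) A) ^ (t - k) * norm (E k \<omega>))"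
proof (induction t)
  case 0 then show ?case by simp
next
  case (Suc t)
  define l where "l = onorm ((*v) A)"
  have l0: "l \<ge> 0" unfolding l_def by (rule onorm_pos_le) simp
  have "norm (nrec A E (Suc t) \<omega>) \<le> l * norm (nrec A E t \<omega> + E t \<omega>)"
    unfolding l_def by (simp add: mmul_bound)
  also have "\<dots> \<le> l * (norm (nrec A E t \<omega>) + norm (E t \<omega>))"
    using l0 by (simp add: mult_left_mono norm_triangle_ineq)
  also have "\<dots> \<le> l * ((\<Sum>k<t. l ^ (t - k) * norm (E k \<omega>)) + norm (E t \<omega>))"
    using l0 Suc by (simp add: mult_left_mono l_def)
  also have "\<dots> = (\<Sum>k<Suc t. l ^ (Suc t - k) * norm (E k \<omega>))"
    by (simp add: sum_distrib_left algebra_simps Suc_diff_le)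
  finally show ?case by (simp add: l_def)
qed

lemma inner_mmul: "inner U (mmul A Y) = inner (mmul (transpose A) U) Y"
proof -
  have "inner U (mmul A Y) = (\<Sum>i\<in>UNIV. \<Sum>r\<in>UNIV. A$i$r * inner (U$i) (Y$r))"
    by (simp add: inner_vec_def mmul_def inner_sum_right)
  also have "\<dots> = (\<Sum>r\<in>UNIV. \<Sum>i\<in>UNIV. A$i$r * inner (U$i) (Y$r))"
    by (rule sum.swap)
  also have "\<dots> = inner (mmul (transpose A) U) Y"
    by (simp add: inner_vec_def mmul_def inner_sum_left transpose_def)
  finally show ?thesis .
qed

lemma mmul_powr:
  fixes z :: "('d::euclidean_space)^'n::finite"
  assumes "p \<ge> 0"
  shows "norm (mmul A z) powr p \<le> onorm ((*v) A) powr p * norm z powr p"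
proof -
  have "norm (mmul A z) powr p \<le> (onorm ((*v) A) * norm z) powr p"
    using assms by (intro powr_mono2 mmul_bound) auto
  also have "\<dots> = onorm ((*v) A) powr p * norm z powr p"
    by (rule powr_mult)
  finally show ?thesis .
qed


lemma powr_m1_le:
  fixes a b p :: real assumes "0 \<le> a" "0 \<le> b" "1 \<le> p"
  shows "a powr (p - 1) * b \<le> a powr p + b powr p"
proof (cases "a \<le> b")
  case True
  have "a powr (p - 1) * b \<le> b powr (p - 1) * b"
    using assms True by (intro mult_right_mono powr_mono2) auto
  also have "\<dots> = b powr p"
  proof (cases "b = 0")
    case False
    have "b powr (p - 1 + 1) = b powr (p - 1) * b powr 1" by (rule powr_add)
    then show ?thesis using assms by simp
  qed (use assms in simp)
  finally show ?thesis using powr_ge_zero[of a p] by linarith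
next
  case False
  then have "a > 0" using assms by simp
  have "a powr (p - 1) * b \<le> a powr (p - 1) * a"
    using False by (intro mult_left_mono) auto
  also have "\<dots> = a powr p"
  proof -
    have "a powr (p - 1 + 1) = a powr (p - 1) * a powr 1" by (rule powr_add)
    then show ?thesis using \<open>a > 0\<close> by simp
  qed
  finally show ?thesis using powr_ge_zero[of b p] by linarith
qed

lemma powr_m2_mult:
  fixes a p :: real assumes "0 \<le> a"
  shows "a powr (p - 2) * a = a powr (p - 1)"
proof (cases "a = 0")
  case False
  have "a powr (p - 2 + 1) = a powr (p - 2) * a powr 1" by (rule powr_add)
  then show ?thesis using assms by (simp add: algebra_simps)
qed simp

lemma nrec_moment:
  fixes E :: "nat \<Rightarrow> 'a \<Rightarrow> ('d::euclidean_space)^'n::finite" and A :: "real^'n^'n"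
    and F :: "nat \<Rightarrow> 'a measure"
  assumes P: "prob_space M" and p: "1 < p" "p \<le> 2"
    and sub: "\<And>k. subalgebra M (F k)"
    and Emeas: "\<And>k. E k \<in> borel_measurable M"
    and Nmeas: "\<And>k. (\<lambda>\<omega>. nrec A E k \<omega>) \<in> borel_measurable (F k)"
    and Eint: "\<And>k. integrable M (\<lambda>\<omega>. norm (E k \<omega>) powr p)"
    and Ebd: "\<And>k. (\<integral>\<omega>. norm (E k \<omega>) powr p \<partial>M) \<le> m"
    and zm: "\<And>k e H. e \<in> Basis \<Longrightarrow> H \<in> borel_measurable (F k) \<Longrightarrow>
        integrable M (\<lambda>\<omega>. H \<omega> * inner (E k \<omega>) e) \<Longrightarrow> (\<integral>\<omega>. H \<omega> * inner (E k \<omega>) e \<partial>M) = 0"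
  shows "integrable M (\<lambda>\<omega>. norm (nrec A E t \<omega>) powr p) \<and>
    (\<integral>\<omega>. norm (nrec A E t \<omega>) powr p \<partial>M)
      \<le> 2 powr p * m * (\<Sum>k<t. onorm ((*v) A) powr (real (t - k) * p))"
proof (induction t)
  case 0 show ?case by simp
next
  case (Suc t)
  interpret prob_space M by (rule P)
  define l where "l = onorm ((*v) A)"
  define l' where "l' = onorm ((*v) (transpose A))"
  have l0: "l \<ge> 0" unfolding l_def by (rule onorm_pos_le) simp
  have l0': "l' \<ge> 0" unfolding l'_def by (rule onorm_pos_le) simp
  define N where "N = nrec A E t"
  define U where "U \<omega> = mmul A (N \<omega>)" for \<omega>
  define Y where "Y = E t"
  define H where "H e \<omega> = p * norm (U \<omega>) powr (p - 2) * inner (mmul (transpose A) (U \<omega>)) e" for e \<omega>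
  have NF[measurable]: "N \<in> borel_measurable (F t)" unfolding N_def using Nmeas[of t] by simp
  have NM[measurable]: "N \<in> borel_measurable M" by (rule measurable_from_subalg[OF sub NF])
  have UF[measurable]: "U \<in> borel_measurable (F t)" unfolding U_def by measurable
  have UM[measurable]: "U \<in> borel_measurable M" unfolding U_def by measurable
  have YM[measurable]: "Y \<in> borel_measurable M" unfolding Y_def by (rule Emeas)
  have HF: "H e \<in> borel_measurable (F t)" for e unfolding H_def by measurable
  have HM[measurable]: "H e \<in> borel_measurable M" for e by (rule measurable_from_subalg[OF sub HF])
  have Nint: "integrable M (\<lambda>\<omega>. norm (N \<omega>) powr p)"
    and Nbd: "(\<integral>\<omega>. norm (N \<omega>) powr p \<partial>M) \<le> 2 powr p * m * (\<Sum>k<t. l powr (real (t - k) * p))"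
    using Suc.IH by (simp_all add: N_def l_def)
  have Yint: "integrable M (\<lambda>\<omega>. norm (Y \<omega>) powr p)" unfolding Y_def by (rule Eint)
  have Ybd: "(\<integral>\<omega>. norm (Y \<omega>) powr p \<partial>M) \<le> m" unfolding Y_def by (rule Ebd)
  have Ule: "norm (U \<omega>) powr p \<le> l powr p * norm (N \<omega>) powr p" for \<omega>
    unfolding U_def l_def using p by (intro mmul_powr) auto
  have AYle: "norm (mmul A (Y \<omega>)) powr p \<le> l powr p * norm (Y \<omega>) powr p" for \<omega>
    unfolding l_def using p by (intro mmul_powr) auto
  have "integrable M (\<lambda>\<omega>. l powr p * norm (N \<omega>) powr p)"
    using Nint by (rule integrable_mult_right)
  then have Uint: "integrable M (\<lambda>\<omega>. norm (U \<omega>) powr p)"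
    by (rule Bochner_Integration.integrable_bound) (use Ule in auto)
  have Hbd: "\<bar>H e \<omega> * inner (Y \<omega>) e\<bar> \<le> p * l' * (norm (U \<omega>) powr p + norm (Y \<omega>) powr p)"
    if e: "e \<in> Basis" for e \<omega>
  proof -
    have "\<bar>inner (mmul (transpose A) (U \<omega>)) e\<bar> \<le> norm (mmul (transpose A) (U \<omega>))"
      using e by (rule Basis_le_norm)
    also have "\<dots> \<le> l' * norm (U \<omega>)" unfolding l'_def by (rule mmul_bound)
    finally have 1: "\<bar>inner (mmul (transpose A) (U \<omega>)) e\<bar> \<le> l' * norm (U \<omega>)" .
    have 2: "\<bar>inner (Y \<omega>) e\<bar> \<le> norm (Y \<omega>)" using e by (rule Basis_le_norm)
    have "\<bar>H e \<omega> * inner (Y \<omega>) e\<bar>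
        = p * norm (U \<omega>) powr (p - 2) * \<bar>inner (mmul (transpose A) (U \<omega>)) e\<bar> * \<bar>inner (Y \<omega>) e\<bar>"
      using p by (simp add: H_def abs_mult)
    also have "\<dots> \<le> p * norm (U \<omega>) powr (p - 2) * (l' * norm (U \<omega>)) * norm (Y \<omega>)"
      using p 1 2 by (intro mult_mono mult_left_mono) auto
    also have "\<dots> = p * l' * (norm (U \<omega>) powr (p - 2) * norm (U \<omega>) * norm (Y \<omega>))"
      by (simp add: algebra_simps)
    also have "norm (U \<omega>) powr (p - 2) * norm (U \<omega>) = norm (U \<omega>) powr (p - 1)"
      by (rule powr_m2_mult) simp
    also have "norm (U \<omega>) powr (p - 1) * norm (Y \<omega>) \<le> norm (U \<omega>) powr p + norm (Y \<omega>) powr p"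
      using p by (intro powr_m1_le) auto
    then have "p * l' * (norm (U \<omega>) powr (p - 1) * norm (Y \<omega>)) \<le> p * l' * (norm (U \<omega>) powr p + norm (Y \<omega>) powr p)"
      using p l0' by (intro mult_left_mono) auto
    finally show ?thesis .
  qed
  have "integrable M (\<lambda>\<omega>. p * l' * (norm (U \<omega>) powr p + norm (Y \<omega>) powr p))"
    using Uint Yint by (intro integrable_mult_right Bochner_Integration.integrable_add)
  then have Hint: "integrable M (\<lambda>\<omega>. H e \<omega> * inner (Y \<omega>) e)" if e: "e \<in> Basis" for e
    by (rule Bochner_Integration.integrable_bound) (use Hbd[OF e] p l0' in \<open>auto intro: order_trans\<close>)
  have Hzero: "(\<integral>\<omega>. H e \<omega> * inner (Y \<omega>) e \<partial>M) = 0" if e: "e \<in> Basis" for e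
    using zm[OF e HF] Hint[OF e] by (simp add: Y_def)
  define R where "R \<omega> = l powr p * norm (N \<omega>) powr p + (\<Sum>e\<in>Basis. H e \<omega> * inner (Y \<omega>) e)
      + 2 powr p * (l powr p * norm (Y \<omega>) powr p)" for \<omega>
  have key: "norm (nrec A E (Suc t) \<omega>) powr p \<le> R \<omega>" for \<omega>
  proof -
    have eq: "nrec A E (Suc t) \<omega> = U \<omega> + mmul A (Y \<omega>)"
      by (simp add: U_def N_def Y_def mmul_add)
    have "inner (U \<omega>) (mmul A (Y \<omega>)) = inner (mmul (transpose A) (U \<omega>)) (Y \<omega>)"
      by (rule inner_mmul)
    also have "\<dots> = (\<Sum>e\<in>Basis. inner (mmul (transpose A) (U \<omega>)) e * inner (Y \<omega>) e)"
      by (rule euclidean_inner)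
    finally have "p * norm (U \<omega>) powr (p - 2) * inner (U \<omega>) (mmul A (Y \<omega>))
        = (\<Sum>e\<in>Basis. H e \<omega> * inner (Y \<omega>) e)"
      by (simp add: H_def sum_distrib_left mult.assoc)
    moreover have "norm (U \<omega> + mmul A (Y \<omega>)) powr p \<le> norm (U \<omega>) powr p
        + p * norm (U \<omega>) powr (p - 2) * inner (U \<omega>) (mmul A (Y \<omega>))
        + 2 powr p * norm (mmul A (Y \<omega>)) powr p"
      using p by (rule pineq)
    moreover have "2 powr p * norm (mmul A (Y \<omega>)) powr p \<le> 2 powr p * (l powr p * norm (Y \<omega>) powr p)"
      using AYle by (intro mult_left_mono) auto
    moreover have "norm (nrec A E (Suc t) \<omega>) powr p = norm (U \<omega> + mmul A (Y \<omega>)) powr p"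
      using eq by simp
    ultimately show ?thesis using Ule[of \<omega>] unfolding R_def by linarith
  qed
  have Rint: "integrable M R"
    unfolding R_def using Nint Yint Hint
    by (intro Bochner_Integration.integrable_add Bochner_Integration.integrable_sum integrable_mult_right) auto
  have NSM: "(\<lambda>\<omega>. nrec A E (Suc t) \<omega>) \<in> borel_measurable M"
    by (rule measurable_from_subalg[OF sub Nmeas])
  have int: "integrable M (\<lambda>\<omega>. norm (nrec A E (Suc t) \<omega>) powr p)"
  proof (rule Bochner_Integration.integrable_bound[OF Rint])
    show "(\<lambda>\<omega>. norm (nrec A E (Suc t) \<omega>) powr p) \<in> borel_measurable M" using NSM by measurable
    show "AE \<omega> in M. norm (norm (nrec A E (Suc t) \<omega>) powr p) \<le> norm (R \<omega>)"
    proof (intro AE_I2)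
      fix \<omega>
      have "norm (nrec A E (Suc t) \<omega>) powr p \<le> \<bar>R \<omega>\<bar>" using key[of \<omega>] abs_ge_self[of "R \<omega>"] by linarith
      then show "norm (norm (nrec A E (Suc t) \<omega>) powr p) \<le> norm (R \<omega>)" by simp
    qed
  qed
  have "(\<integral>\<omega>. norm (nrec A E (Suc t) \<omega>) powr p \<partial>M) \<le> (\<integral>\<omega>. R \<omega> \<partial>M)"
    by (rule integral_mono[OF int Rint key])
  also have "(\<integral>\<omega>. R \<omega> \<partial>M) = l powr p * (\<integral>\<omega>. norm (N \<omega>) powr p \<partial>M)
      + 2 powr p * (l powr p * (\<integral>\<omega>. norm (Y \<omega>) powr p \<partial>M))"
    unfolding R_def using Nint Yint Hint Hzero
    by (simp add: Bochner_Integration.integral_add Bochner_Integration.integrable_add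
        Bochner_Integration.integrable_sum Bochner_Integration.integral_sum integrable_mult_right)
  also have "\<dots> \<le> l powr p * (2 powr p * m * (\<Sum>k<t. l powr (real (t - k) * p))) + 2 powr p * (l powr p * m)"
    using Nbd Ybd by (intro add_mono mult_left_mono) auto
  also have "\<dots> = 2 powr p * m * (\<Sum>k<Suc t. l powr (real (Suc t - k) * p))"
  proof -
    have "l powr p * (\<Sum>k<t. l powr (real (t - k) * p)) = (\<Sum>k<t. l powr (real (Suc t - k) * p))"
      unfolding sum_distrib_left
    proof (rule sum.cong[OF refl])
      fix k assume "k \<in> {..<t}"
      then have "real (Suc t - k) * p = p + real (t - k) * p" by (simp add: Suc_diff_le algebra_simps)
      then show "l powr p * l powr (real (t - k) * p) = l powr (real (Suc t - k) * p)"
        by (simp add: powr_add)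
    qed
    then show ?thesis by (simp add: algebra_simps)
  qed
  finally show ?case using int by (simp add: l_def)
qed


lemma lyap:
  fixes Z :: "'a \<Rightarrow> real"
  assumes P: "prob_space M" and p: "1 < p" and ZM[measurable]: "Z \<in> borel_measurable M"
    and Z0: "\<And>\<omega>. Z \<omega> \<ge> 0" and Zint: "integrable M (\<lambda>\<omega>. Z \<omega> powr p)"
    and Zbd: "(\<integral>\<omega>. Z \<omega> powr p \<partial>M) \<le> B"
  shows "integrable M Z \<and> (\<integral>\<omega>. Z \<omega> \<partial>M) \<le> B powr (1 / p)"
proof -
  interpret prob_space M by (rule P)
  have pt: "Z \<omega> \<le> (c / c powr p) * Z \<omega> powr p / p + c * (p - 1) / p" if c: "c > 0" for c \<omega>
  proof -
    have "Z \<omega> / c \<le> (Z \<omega> / c) powr p / p + (p - 1) / p"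
      using Z0[of \<omega>] c p by (intro convex_bern) auto
    then have "c * (Z \<omega> / c) \<le> c * ((Z \<omega> / c) powr p / p + (p - 1) / p)"
      using c by (intro mult_left_mono) auto
    then show ?thesis using c by (simp add: powr_divide field_simps)
  qed
  have "integrable M (\<lambda>\<omega>. (1 / 1 powr p) * Z \<omega> powr p / p + 1 * (p - 1) / p)"
    using Zint by (intro Bochner_Integration.integrable_add integrable_divide integrable_mult_right) auto
  then have Zi: "integrable M Z"
  proof (rule Bochner_Integration.integrable_bound)
    show "AE \<omega> in M. norm (Z \<omega>) \<le> norm ((1 / 1 powr p) * Z \<omega> powr p / p + 1 * (p - 1) / p)"
      using pt[of 1] Z0 p by (intro AE_I2) (auto simp: abs_of_nonneg intro: order_trans)
  qed simp
  have int_le: "(\<integral>\<omega>. Z \<omega> \<partial>M) \<le> (c / c powr p) * B / p + c * (p - 1) / p" if c: "c > 0" for c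
  proof -
    have "(\<integral>\<omega>. Z \<omega> \<partial>M) \<le> (\<integral>\<omega>. (c / c powr p) * Z \<omega> powr p / p + c * (p - 1) / p \<partial>M)"
      using Zi Zint pt[OF c]
      by (intro integral_mono) (auto intro!: Bochner_Integration.integrable_add integrable_divide integrable_mult_right)
    also have "\<dots> = (c / c powr p) * (\<integral>\<omega>. Z \<omega> powr p \<partial>M) / p + c * (p - 1) / p"
      using Zint by (simp add: Bochner_Integration.integral_add integrable_divide integrable_mult_right prob_space)
    also have "\<dots> \<le> (c / c powr p) * B / p + c * (p - 1) / p"
      using Zbd c p by (intro add_mono divide_right_mono mult_left_mono) auto
    finally show ?thesis .
  qed
  have "0 \<le> (\<integral>\<omega>. Z \<omega> powr p \<partial>M)" by (rule integral_nonneg_AE) simp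
  then have B0: "B \<ge> 0" using Zbd by linarith
  show ?thesis
  proof (cases "B = 0")
    case True
    have "(\<integral>\<omega>. Z \<omega> \<partial>M) \<le> e" if e: "e > 0" for e
    proof -
      have "(\<integral>\<omega>. Z \<omega> \<partial>M) \<le> e * (p - 1) / p" using int_le[OF e] True by simp
      also have "\<dots> \<le> e" using e p by (simp add: field_simps)
      finally show ?thesis .
    qed
    then have "(\<integral>\<omega>. Z \<omega> \<partial>M) \<le> 0" by (meson dense not_le)
    then show ?thesis using Zi True by simp
  next
    case False
    define c where "c = B powr (1 / p)"
    have c0: "c > 0" using False B0 by (simp add: c_def)
    have cp: "c powr p = B" using B0 p by (simp add: c_def powr_powr)
    have "(\<integral>\<omega>. Z \<omega> \<partial>M) \<le> (c / c powr p) * B / p + c * (p - 1) / p" by (rule int_le[OF c0])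
    also have "\<dots> = c" using cp False p by (simp add: field_simps)
    finally show ?thesis using Zi by (simp add: c_def)
  qed
qed




definition consv :: "('n::finite \<Rightarrow> 'd::real_vector) \<Rightarrow> 'd^'n" where
  "consv y = (\<chi> i. y i - (1 / real CARD('n)) *\<^sub>R (\<Sum>r\<in>UNIV. y r))"

definition vc :: "('n::finite \<Rightarrow> 'd) \<Rightarrow> 'd^'n" where
  "vc y = (\<chi> i. y i)"

definition Wt :: "real^'n::finite^'n \<Rightarrow> real^'n^'n" where
  "Wt W = (\<chi> i j. W$i$j - 1 / real CARD('n))"

lemma consv_mix:
  assumes "doubly_stochastic W"
  shows "consv (\<lambda>i. \<Sum>r\<in>UNIV. W$i$r *\<^sub>R u r) = mmul (Wt W) (vc u)"
proof -
  have col: "(\<Sum>i\<in>UNIV. W$i$r) = 1" for r using assms by (simp add: doubly_stochastic_def)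
  have "(\<Sum>i\<in>UNIV. \<Sum>r\<in>UNIV. W$i$r *\<^sub>R u r) = (\<Sum>r\<in>UNIV. \<Sum>i\<in>UNIV. W$i$r *\<^sub>R u r)"
    by (rule sum.swap)
  also have "\<dots> = (\<Sum>r\<in>UNIV. u r)" by (simp add: scaleR_sum_left[symmetric] col)
  finally have s: "(\<Sum>i\<in>UNIV. \<Sum>r\<in>UNIV. W$i$r *\<^sub>R u r) = (\<Sum>r\<in>UNIV. u r)" .
  show ?thesis
    by (simp add: consv_def mmul_def vc_def Wt_def vec_eq_iff s scaleR_left_diff_distrib
        sum_subtractf scaleR_sum_right)
qed

lemma mmul_Wt_const:
  fixes W :: "real^'n::finite^'n"
  assumes "doubly_stochastic W"
  shows "mmul (Wt W) (\<chi> i. c) = 0"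
proof -
  have row: "(\<Sum>r\<in>UNIV. W$i$r) = 1" for i using assms by (simp add: doubly_stochastic_def)
  have "(\<Sum>r\<in>UNIV. (W$i$r - 1 / real CARD('n)) *\<^sub>R c) = 0" for i :: 'n
    by (simp add: scaleR_sum_left[symmetric] sum_subtractf row)
  then show ?thesis by (simp add: mmul_def Wt_def vec_eq_iff)
qed

lemma vc_add: "vc (\<lambda>i. f i + h i) = vc f + vc h"
  by (simp add: vc_def vec_eq_iff)

lemma vc_diff: "vc (\<lambda>i. f i - h i) = vc f - vc h"
  by (simp add: vc_def vec_eq_iff)

lemma vc_scaleR: "vc (\<lambda>i. c *\<^sub>R f i) = c *\<^sub>R vc f"
  by (simp add: vc_def vec_eq_iff)

lemma consv_decomp: "vc y = consv y + (\<chi> i. (1 / real CARD('n)) *\<^sub>R (\<Sum>r\<in>UNIV. y r))"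
  for y :: "'n::finite \<Rightarrow> 'd::real_vector"
  by (simp add: vc_def consv_def vec_eq_iff)

lemma step_cons:
  fixes W :: "real^'n::finite^'n" and st :: "('n \<Rightarrow> 'd::euclidean_space) \<times> ('n \<Rightarrow> 'd) \<times> ('n \<Rightarrow> 'd)"
  assumes W: "doubly_stochastic W" and b: "\<beta> \<noteq> 0"
  shows "consv (snd (snd (gt_step W \<alpha> \<beta> g s st))) =
    mmul (Wt W) (consv (snd (snd st)) + (1 / \<beta> - 1) *\<^sub>R
      vc (\<lambda>i. g i (fst st i) (s i) - fst (snd (gt_step W \<alpha> \<beta> g s st)) i))"
proof -
  obtain x vold yold where st: "st = (x, vold, yold)" by (cases st) auto
  define v where "v i = \<beta> *\<^sub>R vold i + (1 - \<beta>) *\<^sub>R g i (x i) (s i)" for i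
  have vv: "fst (snd (gt_step W \<alpha> \<beta> g s st)) = v"
    by (simp add: gt_step_def st v_def Let_def fun_eq_iff)
  have yy: "snd (snd (gt_step W \<alpha> \<beta> g s st)) = (\<lambda>i. \<Sum>r\<in>UNIV. W$i$r *\<^sub>R (yold r + v r - vold r))"
    by (simp add: gt_step_def st v_def Let_def fun_eq_iff)
  have dv: "v r - vold r = (1 / \<beta> - 1) *\<^sub>R (g r (x r) (s r) - v r)" for r
  proof -
    have 1: "g r (x r) (s r) - v r = \<beta> *\<^sub>R (g r (x r) (s r) - vold r)"
      by (simp add: v_def algebra_simps)
    have 2: "v r - vold r = (1 - \<beta>) *\<^sub>R (g r (x r) (s r) - vold r)"
      by (simp add: v_def algebra_simps)
    have 3: "(1 / \<beta> - 1) * \<beta> = 1 - \<beta>" using b by (simp add: field_simps)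
    show ?thesis unfolding 1 2 scaleR_scaleR 3 ..
  qed
  have "vc (\<lambda>r. yold r + v r - vold r) = consv yold + (1 / \<beta> - 1) *\<^sub>R vc (\<lambda>i. g i (x i) (s i) - v i)
      + (\<chi> i. (1 / real CARD('n)) *\<^sub>R (\<Sum>r\<in>UNIV. yold r))"
  proof -
    have "vc (\<lambda>r. yold r + v r - vold r) = vc yold + vc (\<lambda>r. v r - vold r)"
      by (simp add: vc_def vec_eq_iff algebra_simps)
    also have "vc (\<lambda>r. v r - vold r) = (1 / \<beta> - 1) *\<^sub>R vc (\<lambda>i. g i (x i) (s i) - v i)"
      unfolding dv by (rule vc_scaleR)
    finally show ?thesis unfolding consv_decomp[of yold] by (simp add: algebra_simps)
  qed
  then have "mmul (Wt W) (vc (\<lambda>r. yold r + v r - vold r)) =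
      mmul (Wt W) (consv yold + (1 / \<beta> - 1) *\<^sub>R vc (\<lambda>i. g i (x i) (s i) - v i))"
    using mmul_Wt_const[OF W] by (simp add: mmul_add)
  then show ?thesis using consv_mix[OF W, of "\<lambda>r. yold r + v r - vold r"]
    unfolding yy vv by (simp add: st)
qed


lemma gt_step_v: "fst (snd (gt_step W \<alpha> \<beta> g s st)) = (\<lambda>i. \<beta> *\<^sub>R fst (snd st) i + (1-\<beta>) *\<^sub>R g i (fst st i) (s i))"
  by (simp add: gt_step_def Let_def)

lemma gt_step_y: "snd (snd (gt_step W \<alpha> \<beta> g s st)) =
  (\<lambda>i. \<Sum>r\<in>UNIV. W$i$r *\<^sub>R (snd (snd st) r + fst (snd (gt_step W \<alpha> \<beta> g s st)) r - fst (snd st) r))"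
  by (simp add: gt_step_def Let_def)

lemma gt_step_x: "fst (gt_step W \<alpha> \<beta> g s st) =
  (\<lambda>i. \<Sum>r\<in>UNIV. W$i$r *\<^sub>R (fst st r - \<alpha> *\<^sub>R ((1 / norm (snd (snd (gt_step W \<alpha> \<beta> g s st)) r)) *\<^sub>R snd (snd (gt_step W \<alpha> \<beta> g s st)) r)))"
  by (simp add: gt_step_def Let_def)

lemma g_comp:
  assumes "(\<lambda>(x, s). g x s) \<in> borel \<Otimes>\<^sub>M S \<rightarrow>\<^sub>M borel" "X \<in> borel_measurable N" "Y \<in> N \<rightarrow>\<^sub>M S"
  shows "(\<lambda>\<omega>. g (X \<omega>) (Y \<omega>)) \<in> borel_measurable N"
  using measurable_compose[OF measurable_Pair[OF assms(2,3)] assms(1)] by simp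

lemma vec_meas:
  fixes f :: "'a \<Rightarrow> 'n::finite \<Rightarrow> 'd::euclidean_space"
  assumes "\<And>i. (\<lambda>\<omega>. f \<omega> i) \<in> borel_measurable N"
  shows "(\<lambda>\<omega>. vc (f \<omega>)) \<in> borel_measurable N"
proof (subst borel_measurable_euclidean_space, intro ballI)
  fix e :: "'d^'n" assume "e \<in> Basis"
  then obtain i u where e: "e = axis i u" "u \<in> Basis" by (auto simp: Basis_vec_def)
  have [measurable]: "(\<lambda>\<omega>. f \<omega> i) \<in> borel_measurable N" by (rule assms)
  show "(\<lambda>\<omega>. inner (vc (f \<omega>)) e) \<in> borel_measurable N"
    by (simp add: e inner_axis vc_def)
qed

lemma state_meas:
  fixes g :: "'n::finite \<Rightarrow> 'd::euclidean_space \<Rightarrow> 's \<Rightarrow> 'd"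
  assumes gm: "\<And>i. (\<lambda>(x, s). g i x s) \<in> borel \<Otimes>\<^sub>M S \<rightarrow>\<^sub>M borel"
    and xi: "\<And>i k. k < m \<Longrightarrow> \<xi> i k \<in> N \<rightarrow>\<^sub>M S"
  shows "t \<le> m \<Longrightarrow> (\<forall>i. (\<lambda>\<omega>. fst (gt_state W \<alpha> \<beta> g xz (\<lambda>j k. \<xi> j k \<omega>) t) i) \<in> borel_measurable N
     \<and> (\<lambda>\<omega>. fst (snd (gt_state W \<alpha> \<beta> g xz (\<lambda>j k. \<xi> j k \<omega>) t)) i) \<in> borel_measurable N
     \<and> (\<lambda>\<omega>. snd (snd (gt_state W \<alpha> \<beta> g xz (\<lambda>j k. \<xi> j k \<omega>) t)) i) \<in> borel_measurable N)"
proof (induction t)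
  case 0 then show ?case by simp
next
  case (Suc t)
  define st where "st \<omega> = gt_state W \<alpha> \<beta> g xz (\<lambda>j k. \<xi> j k \<omega>) t" for \<omega>
  define nx where "nx \<omega> = gt_step W \<alpha> \<beta> g (\<lambda>i. \<xi> i t \<omega>) (st \<omega>)" for \<omega>
  have IH: "(\<lambda>\<omega>. fst (st \<omega>) i) \<in> borel_measurable N" "(\<lambda>\<omega>. fst (snd (st \<omega>)) i) \<in> borel_measurable N"
     "(\<lambda>\<omega>. snd (snd (st \<omega>)) i) \<in> borel_measurable N" for i
    using Suc by (auto simp: st_def)
  have xit: "\<xi> i t \<in> N \<rightarrow>\<^sub>M S" for i using Suc.prems by (intro xi) simp
  have gmeas: "(\<lambda>\<omega>. g i (fst (st \<omega>) i) (\<xi> i t \<omega>)) \<in> borel_measurable N" for i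
    by (rule g_comp[OF gm IH(1) xit])
  have vm [measurable]: "(\<lambda>\<omega>. fst (snd (nx \<omega>)) i) \<in> borel_measurable N" for i
  proof -
    note [measurable] = IH gmeas
    show ?thesis unfolding nx_def gt_step_v by measurable
  qed
  have ym [measurable]: "(\<lambda>\<omega>. snd (snd (nx \<omega>)) i) \<in> borel_measurable N" for i
  proof -
    note [measurable] = IH
    show ?thesis unfolding nx_def gt_step_y unfolding nx_def[symmetric] by measurable
  qed
  have xm: "(\<lambda>\<omega>. fst (nx \<omega>) i) \<in> borel_measurable N" for i
  proof -
    note [measurable] = IH
    show ?thesis unfolding nx_def gt_step_x unfolding nx_def[symmetric] by measurable
  qed
  show ?case using vm ym xm by (simp add: nx_def st_def)
qed




lemma nat_filtr_sets:
  assumes xm: "\<And>i k. \<xi> i k \<in> M \<rightarrow>\<^sub>M S"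
  shows "sets (nat_filtr M S \<xi> t) = sigma_sets (space M) {\<xi> i k -` A \<inter> space M | i k A. k < t \<and> A \<in> sets S}"
    and "space (nat_filtr M S \<xi> t) = space M"
    and "{\<xi> i k -` A \<inter> space M | i k A. k < t \<and> A \<in> sets S} \<subseteq> sets M"
proof -
  define G where "G = {\<xi> i k -` A \<inter> space M | i k A. k < t \<and> A \<in> sets S}"
  have Gp: "G \<subseteq> Pow (space M)" unfolding G_def by auto
  have Gs: "G \<subseteq> sets M" unfolding G_def using xm by (auto simp: measurable_def)
  show "sets (nat_filtr M S \<xi> t) = sigma_sets (space M) {\<xi> i k -` A \<inter> space M | i k A. k < t \<and> A \<in> sets S}"
    unfolding nat_filtr_def G_def[symmetric] by (rule sets_measure_of[OF Gp])
  show "space (nat_filtr M S \<xi> t) = space M"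
    by (simp add: nat_filtr_def space_measure_of_conv)
  show "{\<xi> i k -` A \<inter> space M | i k A. k < t \<and> A \<in> sets S} \<subseteq> sets M" using Gs by (simp add: G_def)
qed

lemma nat_filtr_sub:
  assumes xm: "\<And>i k. \<xi> i k \<in> M \<rightarrow>\<^sub>M S"
  shows "subalgebra M (nat_filtr M S \<xi> t)"
  unfolding subalgebra_def nat_filtr_sets[OF xm]
  using sets.sigma_sets_subset[OF nat_filtr_sets(3)[OF xm]] by simp

lemma nat_filtr_meas:
  assumes xm: "\<And>i k. \<xi> i k \<in> M \<rightarrow>\<^sub>M S" and jk: "j < t"
  shows "\<xi> i j \<in> nat_filtr M S \<xi> t \<rightarrow>\<^sub>M S"
proof (rule measurableI)
  show "\<xi> i j x \<in> space S" if "x \<in> space (nat_filtr M S \<xi> t)" for x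
    using that xm[of i j] by (auto simp: measurable_def nat_filtr_sets[OF xm])
  show "\<xi> i j -` A \<inter> space (nat_filtr M S \<xi> t) \<in> sets (nat_filtr M S \<xi> t)" if "A \<in> sets S" for A
  proof -
    have "\<xi> i j -` A \<inter> space M \<in> {\<xi> i k -` A \<inter> space M | i k A. k < t \<and> A \<in> sets S}"
      using that jk by blast
    then show ?thesis unfolding nat_filtr_sets[OF xm] by (rule sigma_sets.Basic)
  qed
qed

lemma nrec_meas:
  fixes E :: "nat \<Rightarrow> 'a \<Rightarrow> ('d::euclidean_space)^'n::finite"
  assumes "\<And>j. j < k \<Longrightarrow> E j \<in> borel_measurable N"
  shows "(\<lambda>\<omega>. nrec A E k \<omega>) \<in> borel_measurable N"
  using assms
proof (induction k)
  case 0 then show ?case by simp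
next
  case (Suc k)
  have [measurable]: "(\<lambda>\<omega>. nrec A E k \<omega>) \<in> borel_measurable N" using Suc by simp
  have [measurable]: "E k \<in> borel_measurable N" using Suc by simp
  show ?case by simp measurable
qed

lemma sum_norm_le_sqrt:
  fixes z :: "('d::real_inner)^'n::finite"
  shows "(\<Sum>i\<in>UNIV. norm (z$i)) \<le> sqrt (real CARD('n)) * norm z"
proof -
  have "(\<Sum>i\<in>UNIV. 1 * norm (z$i))\<^sup>2 \<le> (\<Sum>i\<in>(UNIV::'n set). 1\<^sup>2) * (\<Sum>i\<in>UNIV. (norm (z$i))\<^sup>2)"
    by (rule Cauchy_Schwarz_ineq_sum)
  also have "\<dots> = real CARD('n) * (norm z)\<^sup>2" by (simp add: nsq_vec)
  finally have "(\<Sum>i\<in>UNIV. norm (z$i))\<^sup>2 \<le> (sqrt (real CARD('n)) * norm z)\<^sup>2"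
    by (simp add: power_mult_distrib)
  then show ?thesis by (rule power2_le_imp_le) simp
qed

lemma norm_le_sum_comp:
  fixes z :: "('d::real_inner)^'n::finite"
  shows "norm z \<le> (\<Sum>i\<in>UNIV. norm (z$i))"
  by (simp add: norm_vec_def L2_set_le_sum)

lemma norm_vc_powr:
  fixes f :: "'n::finite \<Rightarrow> 'd::real_inner"
  assumes "0 < p" "p \<le> 2"
  shows "norm (vc f) powr p \<le> (\<Sum>i\<in>UNIV. norm (f i) powr p)"
proof -
  have "norm (vc f) powr p = ((norm (vc f))\<^sup>2) powr (p / 2)" using sq_powr[of "norm (vc f)" "p/2"] by simp
  also have "\<dots> = (\<Sum>i\<in>UNIV. (norm (f i))\<^sup>2) powr (p / 2)" by (simp add: nsq_vec vc_def)
  also have "\<dots> \<le> (\<Sum>i\<in>UNIV. ((norm (f i))\<^sup>2) powr (p / 2))"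
    using assms by (intro powr_subadd_sum) auto
  also have "\<dots> = (\<Sum>i\<in>UNIV. norm (f i) powr p)" using sq_powr by simp
  finally show ?thesis .
qed

lemma cond_zero_mean:
  fixes Y H :: "'a \<Rightarrow> real"
  assumes P: "prob_space M" and sub: "subalgebra M F"
    and ce: "AE \<omega> in M. real_cond_exp M F Y \<omega> = 0"
    and [measurable]: "Y \<in> borel_measurable M" "H \<in> borel_measurable F"
    and int: "integrable M (\<lambda>\<omega>. H \<omega> * Y \<omega>)"
  shows "(\<integral>\<omega>. H \<omega> * Y \<omega> \<partial>M) = 0"
proof -
  interpret prob_space M by (rule P)
  have "finite_measure_subalgebra M F"
    unfolding finite_measure_subalgebra_def finite_measure_subalgebra_axioms_def
    using finite_measure_axioms sub by auto
  then interpret sigma_finite_subalgebra M F by (rule finite_measure_subalgebra_is_sigma_finite)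
  have [measurable]: "H \<in> borel_measurable M" by (rule measurable_from_subalg[OF sub]) simp
  have "(\<integral>\<omega>. H \<omega> * Y \<omega> \<partial>M) = (\<integral>\<omega>. H \<omega> * real_cond_exp M F Y \<omega> \<partial>M)"
    using real_cond_exp_intg(2)[OF int] by simp
  also have "\<dots> = (\<integral>\<omega>. 0 \<partial>M)"
    by (rule integral_cong_AE) (use ce in auto)
  finally show ?thesis by simp
qed

lemma cond_moment:
  fixes Y :: "'a \<Rightarrow> real"
  assumes P: "prob_space M" and sub: "subalgebra M F"
    and ce: "AE \<omega> in M. nn_cond_exp M F (\<lambda>\<omega>. ennreal (Y \<omega>)) \<omega> \<le> ennreal c"
    and [measurable]: "Y \<in> borel_measurable M" and Y0: "\<And>\<omega>. Y \<omega> \<ge> 0" and c0: "c \<ge> 0"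
  shows "integrable M Y \<and> (\<integral>\<omega>. Y \<omega> \<partial>M) \<le> c"
proof -
  interpret prob_space M by (rule P)
  have "finite_measure_subalgebra M F"
    unfolding finite_measure_subalgebra_def finite_measure_subalgebra_axioms_def
    using finite_measure_axioms sub by auto
  then interpret sigma_finite_subalgebra M F by (rule finite_measure_subalgebra_is_sigma_finite)
  have "(\<integral>\<^sup>+\<omega>. ennreal (Y \<omega>) \<partial>M) = (\<integral>\<^sup>+\<omega>. 1 * ennreal (Y \<omega>) \<partial>M)" by simp
  also have "\<dots> = (\<integral>\<^sup>+\<omega>. 1 * nn_cond_exp M F (\<lambda>\<omega>. ennreal (Y \<omega>)) \<omega> \<partial>M)"
    by (rule nn_cond_exp_intg[symmetric]) auto
  also have "\<dots> \<le> (\<integral>\<^sup>+\<omega>. ennreal c \<partial>M)"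
    by (rule nn_integral_mono_AE) (use ce in auto)
  also have "\<dots> = ennreal c" by (simp add: emeasure_space_1)
  finally have le: "(\<integral>\<^sup>+\<omega>. ennreal (Y \<omega>) \<partial>M) \<le> ennreal c" .
  have int: "integrable M Y"
    by (rule integrableI_nonneg) (use Y0 le in \<open>auto simp: top_unique intro: le_less_trans\<close>)
  have "ennreal (\<integral>\<omega>. Y \<omega> \<partial>M) \<le> ennreal c"
    using le nn_integral_eq_integral[OF int] Y0 by simp
  then have "(\<integral>\<omega>. Y \<omega> \<partial>M) \<le> c" using c0 by simp
  with int show ?thesis by simp
qed


lemma x_bound:
  fixes W :: "real^'n::finite^'n"
  assumes W: "doubly_stochastic W" and a0: "\<alpha> \<ge> 0"
  shows "\<forall>i. norm (fst (gt_state W \<alpha> \<beta> g xz s t) i - xz) \<le> \<alpha> * real t"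
proof (induction t)
  case 0 then show ?case by simp
next
  case (Suc t)
  define st where "st = gt_state W \<alpha> \<beta> g xz s t"
  define y where "y = snd (snd (gt_step W \<alpha> \<beta> g (\<lambda>i. s i t) st))"
  define u where "u r = (1 / norm (y r)) *\<^sub>R y r" for r
  have u1: "norm (u r) \<le> 1" for r by (cases "y r = 0") (auto simp: u_def)
  have row: "(\<Sum>r\<in>UNIV. W$i$r) = 1" for i using W by (simp add: doubly_stochastic_def)
  have nn: "W$i$r \<ge> 0" for i r using W by (simp add: doubly_stochastic_def)
  have IH: "norm (fst st r - xz) \<le> \<alpha> * real t" for r using Suc by (simp add: st_def)
  show ?case
  proof
    fix i
    have x': "fst (gt_state W \<alpha> \<beta> g xz s (Suc t)) i = (\<Sum>r\<in>UNIV. W$i$r *\<^sub>R (fst st r - \<alpha> *\<^sub>R u r))"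
      by (simp add: st_def gt_step_x y_def u_def)
    have h: "(\<Sum>r\<in>UNIV. W$i$r *\<^sub>R xz) = xz" by (simp add: scaleR_sum_left[symmetric] row)
    have "fst (gt_state W \<alpha> \<beta> g xz s (Suc t)) i - xz = (\<Sum>r\<in>UNIV. W$i$r *\<^sub>R ((fst st r - xz) - \<alpha> *\<^sub>R u r))"
      unfolding x' by (simp add: scaleR_diff_right sum_subtractf h)
    also have "norm \<dots> \<le> (\<Sum>r\<in>UNIV. norm (W$i$r *\<^sub>R ((fst st r - xz) - \<alpha> *\<^sub>R u r)))"
      by (rule norm_sum)
    also have "\<dots> \<le> (\<Sum>r\<in>UNIV. W$i$r * (\<alpha> * real t + \<alpha>))"
    proof (rule sum_mono)
      fix r
      have "norm ((fst st r - xz) - \<alpha> *\<^sub>R u r) \<le> norm (fst st r - xz) + norm (\<alpha> *\<^sub>R u r)"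
        by (rule norm_triangle_ineq4)
      also have "\<dots> \<le> \<alpha> * real t + \<alpha>"
        using IH[of r] mult_left_le[OF u1[of r] a0] a0 by simp
      finally show "norm (W$i$r *\<^sub>R ((fst st r - xz) - \<alpha> *\<^sub>R u r)) \<le> W$i$r * (\<alpha> * real t + \<alpha>)"
        using nn[of i r] by (simp add: mult_left_mono)
    qed
    also have "\<dots> = (\<Sum>r\<in>UNIV. W$i$r) * (\<alpha> * real t + \<alpha>)" by (rule sum_distrib_right[symmetric])
    also have "\<dots> = \<alpha> * real (Suc t)" by (simp add: row algebra_simps)
    finally show "norm (fst (gt_state W \<alpha> \<beta> g xz s (Suc t)) i - xz) \<le> \<alpha> * real (Suc t)" .
  qed
qed

lemma gradf_cont:
  fixes G :: "'d::euclidean_space \<Rightarrow> 'd"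
  assumes "\<And>x y. norm (G x - G y) \<le> L * norm (x - y)"
  shows "continuous_on UNIV G"
proof (rule lipschitz_on_continuous_on)
  show "\<bar>L\<bar>-lipschitz_on UNIV G"
  proof (rule lipschitz_onI)
    fix x y :: 'd
    have "dist (G x) (G y) \<le> L * dist x y" using assms by (simp add: dist_norm)
    also have "\<dots> \<le> \<bar>L\<bar> * dist x y" by (simp add: mult_right_mono)
    finally show "dist (G x) (G y) \<le> \<bar>L\<bar> * dist x y" .
  qed simp
qed




theorem lemma6:
  fixes M :: "'a measure" and S :: "'s measure"
    and f :: "'n::finite \<Rightarrow> 'd::euclidean_space \<Rightarrow> real" and gradf :: "'n \<Rightarrow> 'd \<Rightarrow> 'd"
    and g :: "'n \<Rightarrow> 'd \<Rightarrow> 's \<Rightarrow> 'd" and \<xi> :: "'n \<Rightarrow> nat \<Rightarrow> 'a \<Rightarrow> 's"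
    and W :: "real^'n^'n" and L p \<sigma> \<alpha> \<beta> :: real and x0 :: 'd and t :: nat
  assumes prob: "prob_space M"
    and grad: "\<And>i x. (f i has_derivative (\<lambda>h. gradf i x \<bullet> h)) (at x)"
    and smooth: "\<And>i x y. norm (gradf i x - gradf i y) \<le> L * norm (x - y)"
    and xi_meas: "\<And>i k. \<xi> i k \<in> M \<rightarrow>\<^sub>M S"
    and g_meas: "\<And>i. (\<lambda>(x, s). g i x s) \<in> borel \<Otimes>\<^sub>M S \<rightarrow>\<^sub>M borel"
    and p: "1 < p" "p \<le> 2" and \<sigma>: "\<sigma> \<ge> 0"
    and unbiased: "\<And>i k X. X \<in> borel_measurable (nat_filtr M S \<xi> k) \<Longrightarrow>
        integrable M (\<lambda>\<omega>. g i (X \<omega>) (\<xi> i k \<omega>) - gradf i (X \<omega>)) \<and>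
        (\<forall>b\<in>Basis. AE \<omega> in M. real_cond_exp M (nat_filtr M S \<xi> k)
            (\<lambda>\<omega>. (g i (X \<omega>) (\<xi> i k \<omega>) - gradf i (X \<omega>)) \<bullet> b) \<omega> = 0)"
    and moment: "\<And>i k X. X \<in> borel_measurable (nat_filtr M S \<xi> k) \<Longrightarrow>
        AE \<omega> in M. nn_cond_exp M (nat_filtr M S \<xi> k)
            (\<lambda>\<omega>. ennreal (norm (g i (X \<omega>) (\<xi> i k \<omega>) - gradf i (X \<omega>)) powr p)) \<omega>
          \<le> ennreal (\<sigma> powr p)"
    and indep: "prob_space.indep_vars M (\<lambda>_. S) (\<lambda>(i, k). \<xi> i k) UNIV"
    and Wds: "doubly_stochastic W" and Wprim: "primitive_matrix W"
    and lam: "mix_lambda W < 1"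
    and \<alpha>: "\<alpha> > 0" and \<beta>: "0 < \<beta>" "\<beta> < 1"
  shows
    "(1 / real CARD('n)) * prob_space.expectation M (\<lambda>\<omega>.
        \<Sum>i\<in>UNIV. norm (gt_y W \<alpha> \<beta> g x0 (\<lambda>j k. \<xi> j k \<omega>) t i
          - (1 / real CARD('n)) *\<^sub>R (\<Sum>r\<in>UNIV. gt_y W \<alpha> \<beta> g x0 (\<lambda>j k. \<xi> j k \<omega>) t r)))
     \<le> 2 * sqrt 2 * sqrt (real CARD('n)) * (1 / \<beta> - 1)
          * (\<Sum>k\<le>t. mix_lambda W powr (real (t - k + 1) * p)) powr (1 / p) * \<sigma>
       + (1 / sqrt (real CARD('n))) * (1 / \<beta> - 1)
          * (\<Sum>k\<le>t. mix_lambda W ^ (t - k + 1) * prob_space.expectation M (\<lambda>\<omega>.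
              stack_norm (\<lambda>i. gradf i (gt_x W \<alpha> \<beta> g x0 (\<lambda>j k. \<xi> j k \<omega>) k i)
                              - gt_v W \<alpha> \<beta> g x0 (\<lambda>j k. \<xi> j k \<omega>) k i)))"
  proof -
  interpret P: prob_space M by (rule prob)
  define n where "n = real CARD('n)"
  have n1: "n \<ge> 1" unfolding n_def using zero_less_card_finite[where 'a='n] by linarith
  define a where "a = 1 / \<beta> - 1"
  have a0: "a > 0" using \<beta> by (simp add: a_def field_simps)
  define A where "A = Wt W"
  define lam where "lam = mix_lambda W"
  have lamA: "onorm ((*v) A) = lam" by (simp add: lam_def A_def mix_lambda_def Wt_def)
  have lam0: "lam \<ge> 0" unfolding lamA[symmetric] by (rule onorm_pos_le) simp
  define F where "F = nat_filtr M S \<xi>"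
  have sub: "subalgebra M (F k)" for k unfolding F_def by (rule nat_filtr_sub[OF xi_meas])
  have xiF: "\<xi> i j \<in> F m \<rightarrow>\<^sub>M S" if "j < m" for i j m
    unfolding F_def by (rule nat_filtr_meas[OF xi_meas that])
  define st where "st k \<omega> = gt_state W \<alpha> \<beta> g x0 (\<lambda>j k. \<xi> j k \<omega>) k" for k \<omega>
  define X where "X k \<omega> i = fst (st k \<omega>) i" for k \<omega> i
  define V where "V k \<omega> i = fst (snd (st k \<omega>)) i" for k \<omega> i
  define eps where "eps k \<omega> i = g i (X k \<omega> i) (\<xi> i k \<omega>) - gradf i (X k \<omega> i)" for k \<omega> i
  define Eps where "Eps k \<omega> = vc (eps k \<omega>)" for k \<omega>
  define Del where "Del k \<omega> = vc (\<lambda>i. gradf i (X k \<omega> i) - V (Suc k) \<omega> i)" for k \<omega>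
  have gc: "continuous_on UNIV (gradf i)" for i by (rule gradf_cont[OF smooth])
  have XF: "(\<lambda>\<omega>. X j \<omega> i) \<in> borel_measurable (F m)" if "j \<le> m" for j m i
    using state_meas[OF g_meas, where m=m and \<xi>=\<xi> and N="F m" and t=j and W=W and \<alpha>=\<alpha> and \<beta>=\<beta> and xz=x0] xiF that by (simp add: X_def st_def)
  have XM: "(\<lambda>\<omega>. X j \<omega> i) \<in> borel_measurable M" "(\<lambda>\<omega>. V j \<omega> i) \<in> borel_measurable M" for j i
    using state_meas[OF g_meas, where m=j and \<xi>=\<xi> and N=M and t=j and W=W and \<alpha>=\<alpha> and \<beta>=\<beta> and xz=x0] xi_meas by (simp_all add: X_def V_def st_def)
  have epsF: "(\<lambda>\<omega>. eps j \<omega> i) \<in> borel_measurable (F m)" if "j < m" for j m i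
  proof -
    have [measurable]: "(\<lambda>\<omega>. g i (X j \<omega> i) (\<xi> i j \<omega>)) \<in> borel_measurable (F m)"
      by (rule g_comp[OF g_meas XF xiF]) (use that in auto)
    have [measurable]: "(\<lambda>\<omega>. gradf i (X j \<omega> i)) \<in> borel_measurable (F m)"
      by (rule borel_measurable_continuous_on[OF gc XF]) (use that in auto)
    show ?thesis unfolding eps_def by measurable
  qed
  have epsM: "(\<lambda>\<omega>. eps j \<omega> i) \<in> borel_measurable M" for j i
  proof -
    have [measurable]: "(\<lambda>\<omega>. g i (X j \<omega> i) (\<xi> i j \<omega>)) \<in> borel_measurable M"
      by (rule g_comp[OF g_meas XM(1) xi_meas])
    have [measurable]: "(\<lambda>\<omega>. gradf i (X j \<omega> i)) \<in> borel_measurable M"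
      by (rule borel_measurable_continuous_on[OF gc XM(1)])
    show ?thesis unfolding eps_def by measurable
  qed
  have EpsF: "Eps j \<in> borel_measurable (F m)" if "j < m" for j m
    unfolding Eps_def by (rule vec_meas) (rule epsF[OF that])
  have EpsM[measurable]: "Eps j \<in> borel_measurable M" for j
    unfolding Eps_def by (rule vec_meas) (rule epsM)
  have NF: "(\<lambda>\<omega>. nrec A Eps k \<omega>) \<in> borel_measurable (F k)" for k
    by (rule nrec_meas) (rule EpsF)
  have NM[measurable]: "(\<lambda>\<omega>. nrec A Eps k \<omega>) \<in> borel_measurable M" for k
    by (rule nrec_meas) (rule EpsM)
  have mom_i: "integrable M (\<lambda>\<omega>. norm (eps k \<omega> i) powr p) \<and> (\<integral>\<omega>. norm (eps k \<omega> i) powr p \<partial>M) \<le> \<sigma> powr p" for k i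
  proof -
    have XFk: "(\<lambda>\<omega>. X k \<omega> i) \<in> borel_measurable (nat_filtr M S \<xi> k)" using XF[of k k i] by (simp add: F_def)
    have ce: "AE \<omega> in M. nn_cond_exp M (nat_filtr M S \<xi> k) (\<lambda>\<omega>. ennreal (norm (eps k \<omega> i) powr p)) \<omega> \<le> ennreal (\<sigma> powr p)"
      using moment[OF XFk, where i=i] by (simp add: eps_def)
    have [measurable]: "(\<lambda>\<omega>. eps k \<omega> i) \<in> borel_measurable M" by (rule epsM)
    show ?thesis
      by (rule cond_moment[OF prob nat_filtr_sub[OF xi_meas] ce]) auto
  qed
  have Epw: "norm (Eps k \<omega>) powr p \<le> (\<Sum>i\<in>UNIV. norm (eps k \<omega> i) powr p)" for k \<omega>
    unfolding Eps_def using p by (intro norm_vc_powr) auto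
  have sumI: "integrable M (\<lambda>\<omega>. \<Sum>i\<in>UNIV. norm (eps k \<omega> i) powr p)" for k
    using mom_i by (intro Bochner_Integration.integrable_sum) auto
  have Eint: "integrable M (\<lambda>\<omega>. norm (Eps k \<omega>) powr p)" for k
  proof (rule Bochner_Integration.integrable_bound[OF sumI[of k]])
    show "(\<lambda>\<omega>. norm (Eps k \<omega>) powr p) \<in> borel_measurable M" by measurable
    show "AE \<omega> in M. norm (norm (Eps k \<omega>) powr p) \<le> norm (\<Sum>i\<in>UNIV. norm (eps k \<omega> i) powr p)"
    proof (intro AE_I2)
      fix \<omega>
      have "0 \<le> (\<Sum>i\<in>UNIV. norm (eps k \<omega> i) powr p)" by (simp add: sum_nonneg)
      then show "norm (norm (Eps k \<omega>) powr p) \<le> norm (\<Sum>i\<in>UNIV. norm (eps k \<omega> i) powr p)"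
        using Epw[of k \<omega>] by simp
    qed
  qed
  have Ebd: "(\<integral>\<omega>. norm (Eps k \<omega>) powr p \<partial>M) \<le> n * \<sigma> powr p" for k
  proof -
    have "(\<integral>\<omega>. norm (Eps k \<omega>) powr p \<partial>M) \<le> (\<integral>\<omega>. (\<Sum>i\<in>UNIV. norm (eps k \<omega> i) powr p) \<partial>M)"
      by (rule integral_mono[OF Eint sumI Epw])
    also have "\<dots> = (\<Sum>i\<in>UNIV. (\<integral>\<omega>. norm (eps k \<omega> i) powr p \<partial>M))"
      using mom_i by (intro Bochner_Integration.integral_sum) auto
    also have "\<dots> \<le> (\<Sum>i\<in>(UNIV::'n set). \<sigma> powr p)"
      using mom_i by (intro sum_mono) auto
    also have "\<dots> = n * \<sigma> powr p" by (simp add: n_def)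
    finally show ?thesis .
  qed
  have zm: "(\<integral>\<omega>. H \<omega> * inner (Eps k \<omega>) e \<partial>M) = 0"
    if eB: "e \<in> Basis" and HF: "H \<in> borel_measurable (F k)" and HI: "integrable M (\<lambda>\<omega>. H \<omega> * inner (Eps k \<omega>) e)" for k e H
  proof -
    obtain i u where e: "e = axis i u" "u \<in> Basis" using eB by (auto simp: Basis_vec_def)
    have ie: "inner (Eps k \<omega>) e = inner (eps k \<omega> i) u" for \<omega> by (simp add: e inner_axis Eps_def vc_def)
    have XFk: "(\<lambda>\<omega>. X k \<omega> i) \<in> borel_measurable (nat_filtr M S \<xi> k)" using XF[of k k i] by (simp add: F_def)
    have "\<forall>b\<in>Basis. AE \<omega> in M. real_cond_exp M (nat_filtr M S \<xi> k) (\<lambda>\<omega>. inner (eps k \<omega> i) b) \<omega> = 0"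
      using conjunct2[OF unbiased[OF XFk, where i=i]] unfolding eps_def .
    then have ce: "AE \<omega> in M. real_cond_exp M (nat_filtr M S \<xi> k) (\<lambda>\<omega>. inner (eps k \<omega> i) u) \<omega> = 0"
      using e(2) by blast
    have [measurable]: "(\<lambda>\<omega>. eps k \<omega> i) \<in> borel_measurable M" by (rule epsM)
    have Ym: "(\<lambda>\<omega>. inner (eps k \<omega> i) u) \<in> borel_measurable M" by measurable
    have HF': "H \<in> borel_measurable (nat_filtr M S \<xi> k)" using HF unfolding F_def .
    have HI': "integrable M (\<lambda>\<omega>. H \<omega> * inner (eps k \<omega> i) u)" using HI unfolding ie .
    have "(\<integral>\<omega>. H \<omega> * inner (eps k \<omega> i) u \<partial>M) = 0"
      by (rule cond_zero_mean[OF prob nat_filtr_sub[OF xi_meas] ce Ym HF' HI'])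
    then show ?thesis by (simp add: ie)
  qed
  define SS where "SS = (\<Sum>k\<le>t. lam powr (real (t - k + 1) * p))"
  have NMom: "integrable M (\<lambda>\<omega>. norm (nrec A Eps (Suc t) \<omega>) powr p) \<and>
      (\<integral>\<omega>. norm (nrec A Eps (Suc t) \<omega>) powr p \<partial>M) \<le> 2 powr p * (n * \<sigma> powr p) * SS"
  proof -
    have re: "(\<Sum>k<Suc t. lam powr (real (Suc t - k) * p)) = SS"
      unfolding SS_def lessThan_Suc_atMost
      by (rule sum.cong) (auto simp: Suc_diff_le)
    show ?thesis
      using nrec_moment[OF prob p sub EpsM NF Eint Ebd zm, of "Suc t"] unfolding lamA re .
  qed
  have NInt: "integrable M (\<lambda>\<omega>. norm (nrec A Eps (Suc t) \<omega>))"
    and NBd: "(\<integral>\<omega>. norm (nrec A Eps (Suc t) \<omega>) \<partial>M) \<le> 2 * n powr (1/p) * \<sigma> * SS powr (1/p)"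
  proof -
    have L: "integrable M (\<lambda>\<omega>. norm (nrec A Eps (Suc t) \<omega>)) \<and>
      (\<integral>\<omega>. norm (nrec A Eps (Suc t) \<omega>) \<partial>M) \<le> (2 powr p * (n * \<sigma> powr p) * SS) powr (1 / p)"
      by (rule lyap[OF prob p(1) _ _ conjunct1[OF NMom] conjunct2[OF NMom]]) auto
    have "(2 powr p * (n * \<sigma> powr p) * SS) powr (1 / p) = 2 * n powr (1/p) * \<sigma> * SS powr (1/p)"
      using p \<sigma> by (simp add: powr_mult powr_powr)
    then show "integrable M (\<lambda>\<omega>. norm (nrec A Eps (Suc t) \<omega>))"
      "(\<integral>\<omega>. norm (nrec A Eps (Suc t) \<omega>) \<partial>M) \<le> 2 * n powr (1/p) * \<sigma> * SS powr (1/p)"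
      using L by simp_all
  qed
  have XFk: "(\<lambda>\<omega>. X k \<omega> i) \<in> borel_measurable (nat_filtr M S \<xi> k)" for k i
    using XF[of k k i] by (simp add: F_def)
  have epsI: "integrable M (\<lambda>\<omega>. eps k \<omega> i)" for k i
    using unbiased[OF XFk[of k i], where i=i] by (simp add: eps_def)
  have GM: "(\<lambda>\<omega>. gradf i (X k \<omega> i)) \<in> borel_measurable M" for k i
    by (rule borel_measurable_continuous_on[OF gc XM(1)])
  have GI: "integrable M (\<lambda>\<omega>. gradf i (X k \<omega> i))" for k i
  proof (rule P.integrable_const_bound[OF _ GM])
    show "AE \<omega> in M. norm (gradf i (X k \<omega> i)) \<le> norm (gradf i x0) + \<bar>L\<bar> * (\<alpha> * real k)"
    proof (intro AE_I2)
      fix \<omega>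
      have xb: "norm (X k \<omega> i - x0) \<le> \<alpha> * real k"
        using x_bound[OF Wds, where \<alpha>=\<alpha> and \<beta>=\<beta> and g=g and xz=x0 and s="\<lambda>j k. \<xi> j k \<omega>" and t=k] \<alpha> by (simp add: X_def st_def)
      have "norm (gradf i (X k \<omega> i)) \<le> norm (gradf i x0) + norm (gradf i (X k \<omega> i) - gradf i x0)"
        by (metis add.commute diff_add_cancel norm_triangle_ineq)
      also have "norm (gradf i (X k \<omega> i) - gradf i x0) \<le> L * norm (X k \<omega> i - x0)" by (rule smooth)
      also have "L * norm (X k \<omega> i - x0) \<le> \<bar>L\<bar> * norm (X k \<omega> i - x0)" by (simp add: mult_right_mono)
      also have "\<dots> \<le> \<bar>L\<bar> * (\<alpha> * real k)" using xb by (simp add: mult_left_mono)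
      finally show "norm (gradf i (X k \<omega> i)) \<le> norm (gradf i x0) + \<bar>L\<bar> * (\<alpha> * real k)" by simp
    qed
  qed
  have VI: "\<forall>i. integrable M (\<lambda>\<omega>. V j \<omega> i)" for j
  proof (induction j)
    case 0 then show ?case by (simp add: V_def st_def)
  next
    case (Suc j)
    have eq: "V (Suc j) \<omega> i = \<beta> *\<^sub>R V j \<omega> i + (1 - \<beta>) *\<^sub>R (eps j \<omega> i + gradf i (X j \<omega> i))" for \<omega> i
      by (simp add: V_def X_def st_def gt_step_v eps_def)
    show ?case
    proof
      fix i
      show "integrable M (\<lambda>\<omega>. V (Suc j) \<omega> i)"
        unfolding eq using Suc epsI GI by (intro Bochner_Integration.integrable_add integrable_scaleR_right) auto
    qed
  qed
  have DcI: "integrable M (\<lambda>\<omega>. norm (gradf i (X k \<omega> i) - V (Suc k) \<omega> i))" for k i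
    using GI VI by (intro integrable_norm integrable_diff) auto
  have DM[measurable]: "Del k \<in> borel_measurable M" for k
  proof -
    have [measurable]: "(\<lambda>\<omega>. gradf i (X k \<omega> i)) \<in> borel_measurable M" "(\<lambda>\<omega>. V (Suc k) \<omega> i) \<in> borel_measurable M" for i
      by (rule GM) (rule XM(2))
    show ?thesis unfolding Del_def by (rule vec_meas) measurable
  qed
  have DInt: "integrable M (\<lambda>\<omega>. norm (Del k \<omega>))" for k
  proof (rule Bochner_Integration.integrable_bound)
    show "integrable M (\<lambda>\<omega>. \<Sum>i\<in>UNIV. norm (gradf i (X k \<omega> i) - V (Suc k) \<omega> i))"
      using DcI by (intro Bochner_Integration.integrable_sum) auto
    show "(\<lambda>\<omega>. norm (Del k \<omega>)) \<in> borel_measurable M" by measurable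
    show "AE \<omega> in M. norm (norm (Del k \<omega>)) \<le> norm (\<Sum>i\<in>UNIV. norm (gradf i (X k \<omega> i) - V (Suc k) \<omega> i))"
    proof (intro AE_I2)
      fix \<omega>
      have "norm (Del k \<omega>) \<le> (\<Sum>i\<in>UNIV. norm (Del k \<omega> $ i))" by (rule norm_le_sum_comp)
      then show "norm (norm (Del k \<omega>)) \<le> norm (\<Sum>i\<in>UNIV. norm (gradf i (X k \<omega> i) - V (Suc k) \<omega> i))"
        by (simp add: Del_def vc_def)
    qed
  qed
  have cons: "consv (snd (snd (st k \<omega>))) = a *\<^sub>R nrec A Eps k \<omega> + a *\<^sub>R nrec A Del k \<omega>" for k \<omega>
  proof (induction k)
    case 0 then show ?case by (simp add: st_def consv_def vec_eq_iff)
  next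
    case (Suc k)
    have stS: "st (Suc k) \<omega> = gt_step W \<alpha> \<beta> g (\<lambda>i. \<xi> i k \<omega>) (st k \<omega>)" by (simp add: st_def)
    have b0: "\<beta> \<noteq> 0" using \<beta> by simp
    have vce: "vc (\<lambda>i. g i (fst (st k \<omega>) i) (\<xi> i k \<omega>) - fst (snd (gt_step W \<alpha> \<beta> g (\<lambda>i. \<xi> i k \<omega>) (st k \<omega>))) i)
        = Eps k \<omega> + Del k \<omega>"
      by (simp add: Eps_def Del_def eps_def vc_def vec_eq_iff X_def V_def stS)
    have "a *\<^sub>R nrec A Eps k \<omega> + a *\<^sub>R nrec A Del k \<omega> + a *\<^sub>R (Eps k \<omega> + Del k \<omega>)
        = a *\<^sub>R (nrec A Eps k \<omega> + Eps k \<omega>) + a *\<^sub>R (nrec A Del k \<omega> + Del k \<omega>)"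
      by (simp add: algebra_simps)
    then show ?case
      unfolding stS step_cons[OF Wds b0] vce Suc
      by (simp add: a_def[symmetric] A_def[symmetric] mmul_add mmul_scaleR)
  qed
  define LHSf where "LHSf \<omega> = (\<Sum>i\<in>UNIV. norm (gt_y W \<alpha> \<beta> g x0 (\<lambda>j k. \<xi> j k \<omega>) t i
          - (1 / real CARD('n)) *\<^sub>R (\<Sum>r\<in>UNIV. gt_y W \<alpha> \<beta> g x0 (\<lambda>j k. \<xi> j k \<omega>) t r)))" for \<omega>
  define Rf where "Rf \<omega> = sqrt n * a * (norm (nrec A Eps (Suc t) \<omega>) + (\<Sum>k\<le>t. lam ^ (t - k + 1) * norm (Del k \<omega>)))" for \<omega>
  have pw: "LHSf \<omega> \<le> Rf \<omega>" for \<omega>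
  proof -
    define Y where "Y = snd (snd (st (Suc t) \<omega>))"
    define nN where "nN = norm (nrec A Eps (Suc t) \<omega>)"
    define nR where "nR = norm (nrec A Del (Suc t) \<omega>)"
    define T' where "T' = (\<Sum>k\<le>t. lam ^ (t - k + 1) * norm (Del k \<omega>))"
    have gy: "gt_y W \<alpha> \<beta> g x0 (\<lambda>j k. \<xi> j k \<omega>) t = Y" by (simp add: gt_y_def st_def Y_def)
    have e1: "LHSf \<omega> = (\<Sum>i\<in>UNIV. norm (consv Y $ i))" by (simp add: LHSf_def gy consv_def)
    have e2: "(\<Sum>i\<in>UNIV. norm (consv Y $ i)) \<le> sqrt n * norm (consv Y)" unfolding n_def by (rule sum_norm_le_sqrt)
    have "norm (consv Y) \<le> norm (a *\<^sub>R nrec A Eps (Suc t) \<omega>) + norm (a *\<^sub>R nrec A Del (Suc t) \<omega>)"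
      unfolding Y_def cons by (rule norm_triangle_ineq)
    then have e3: "norm (consv Y) \<le> a * nN + a * nR" using a0 by (simp add: nN_def nR_def)
    have "nR \<le> (\<Sum>k<Suc t. lam ^ (Suc t - k) * norm (Del k \<omega>))"
      using nrec_norm[of A Del "Suc t" \<omega>] unfolding lamA nR_def .
    also have "\<dots> = T'"
      unfolding lessThan_Suc_atMost T'_def by (rule sum.cong) (auto simp: Suc_diff_le)
    finally have e4: "nR \<le> T'" .
    have "a * nN + a * nR \<le> a * nN + a * T'" using e4 a0 by simp
    with e3 have "norm (consv Y) \<le> a * nN + a * T'" by linarith
    then have "sqrt n * norm (consv Y) \<le> sqrt n * (a * nN + a * T')"
      by (rule mult_left_mono) (use n1 in simp)
    moreover have "Rf \<omega> = sqrt n * (a * nN + a * T')"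
      by (simp add: Rf_def nN_def T'_def algebra_simps)
    ultimately show ?thesis using e1 e2 by linarith
  qed
  have RfI: "integrable M Rf"
    unfolding Rf_def using NInt DInt
    by (intro integrable_mult_right Bochner_Integration.integrable_add Bochner_Integration.integrable_sum) auto
  have Rf0: "Rf \<omega> \<ge> 0" for \<omega>
    unfolding Rf_def using a0 lam0 n1 by (intro mult_nonneg_nonneg add_nonneg_nonneg sum_nonneg) auto
  have "(1 / n) * (\<integral>\<omega>. LHSf \<omega> \<partial>M) \<le> (1 / n) * (\<integral>\<omega>. Rf \<omega> \<partial>M)"
    using n1 by (intro mult_left_mono integral_mono'[OF RfI] pw Rf0) auto
  also have "(\<integral>\<omega>. Rf \<omega> \<partial>M) = sqrt n * a * ((\<integral>\<omega>. norm (nrec A Eps (Suc t) \<omega>) \<partial>M)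
      + (\<Sum>k\<le>t. lam ^ (t - k + 1) * (\<integral>\<omega>. norm (Del k \<omega>) \<partial>M)))"
  proof -
    have i2: "(\<integral>\<omega>. (\<Sum>k\<le>t. lam ^ (t - k + 1) * norm (Del k \<omega>)) \<partial>M)
        = (\<Sum>k\<le>t. lam ^ (t - k + 1) * (\<integral>\<omega>. norm (Del k \<omega>) \<partial>M))"
      using DInt by (simp add: Bochner_Integration.integral_sum integrable_mult_right)
    have i1: "(\<integral>\<omega>. norm (nrec A Eps (Suc t) \<omega>) + (\<Sum>k\<le>t. lam ^ (t - k + 1) * norm (Del k \<omega>)) \<partial>M)
        = (\<integral>\<omega>. norm (nrec A Eps (Suc t) \<omega>) \<partial>M) + (\<integral>\<omega>. (\<Sum>k\<le>t. lam ^ (t - k + 1) * norm (Del k \<omega>)) \<partial>M)"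
      using NInt DInt
      by (intro Bochner_Integration.integral_add) (auto intro!: Bochner_Integration.integrable_sum integrable_mult_right)
    show ?thesis unfolding Rf_def integral_mult_right_zero i1 i2 ..
  qed
  also have "(1 / n) * \<dots> \<le> 2 * sqrt 2 * sqrt n * a * SS powr (1 / p) * \<sigma>
      + (1 / sqrt n) * a * (\<Sum>k\<le>t. lam ^ (t - k + 1) * (\<integral>\<omega>. norm (Del k \<omega>) \<partial>M))"
  proof -
    define I where "I = (\<integral>\<omega>. norm (nrec A Eps (Suc t) \<omega>) \<partial>M)"
    define T where "T = (\<Sum>k\<le>t. lam ^ (t - k + 1) * (\<integral>\<omega>. norm (Del k \<omega>) \<partial>M))"
    have np: "n powr (1 / p) \<le> n"
      using powr_mono[of "1/p" 1 n] n1 p by simp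
    have S0: "0 \<le> SS powr (1/p)" by simp
    have "(1 / n) * (sqrt n * a * I) \<le> (1 / n) * (sqrt n * a * (2 * n powr (1/p) * \<sigma> * SS powr (1/p)))"
      using NBd n1 a0 by (intro mult_left_mono) (auto simp: I_def)
    also have "\<dots> = (n powr (1 / p) / n) * (2 * sqrt n * a * SS powr (1/p) * \<sigma>)" by simp
    also have "\<dots> \<le> 1 * (2 * sqrt 2 * sqrt n * a * SS powr (1/p) * \<sigma>)"
    proof (rule mult_mono)
      show "n powr (1 / p) / n \<le> 1" using np n1 by simp
      have "sqrt 2 \<ge> 1" by simp
      then show "2 * sqrt n * a * SS powr (1/p) * \<sigma> \<le> 2 * sqrt 2 * sqrt n * a * SS powr (1/p) * \<sigma>"
        using a0 n1 \<sigma> S0 by (intro mult_right_mono) (auto intro!: mult_nonneg_nonneg)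
    qed (use a0 n1 \<sigma> S0 in auto)
    finally have 1: "(1 / n) * (sqrt n * a * I) \<le> 2 * sqrt 2 * sqrt n * a * SS powr (1/p) * \<sigma>" by simp
    have 2: "(1 / n) * (sqrt n * a * T) = (1 / sqrt n) * a * T" using n1 by (simp add: field_simps)
    have 3: "(1 / n) * (sqrt n * a * (I + T)) = (1 / n) * (sqrt n * a * I) + (1 / n) * (sqrt n * a * T)"
      by (simp only: distrib_left)
    show ?thesis unfolding I_def[symmetric] T_def[symmetric] 3 2 using 1 by linarith
  qed
  finally have fin: "(1 / n) * (\<integral>\<omega>. LHSf \<omega> \<partial>M) \<le> 2 * sqrt 2 * sqrt n * a * SS powr (1 / p) * \<sigma>
      + (1 / sqrt n) * a * (\<Sum>k\<le>t. lam ^ (t - k + 1) * (\<integral>\<omega>. norm (Del k \<omega>) \<partial>M))" .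
  have snorm: "stack_norm (\<lambda>i. gradf i (gt_x W \<alpha> \<beta> g x0 (\<lambda>j k. \<xi> j k \<omega>) k i)
      - gt_v W \<alpha> \<beta> g x0 (\<lambda>j k. \<xi> j k \<omega>) k i) = norm (Del k \<omega>)" for k \<omega>
    by (simp add: stack_norm_def norm_vec_def L2_set_def Del_def vc_def gt_x_def gt_v_def X_def V_def st_def)
  show ?thesis using fin unfolding snorm[symmetric] LHSf_def n_def a_def SS_def lam_def .
qed


end
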